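(* $\mathfrak{b}_{\mathrm{game}}^{\mathrm{II}} = \mathfrak{d}$, where $\mathfrak{d}$ is the dominating number.
   Context: For $x,y\in\omega^\omega$, $x\le^* y$ means $x(n)\le y(n)$ for all but finitely many $n$. $\mathfrak{d}$ is the least size of a family $\mathcal{A}\subseteq\omega^\omega$ such that every $x\in\omega^\omega$ satisfies $x\le^* y$ for some $y\in\mathcal{A}$. For $\mathcal{A}\subseteq\omega^\omega$, the bounding game with respect to $\mathcal{A}$ is the infinite two-player game in which, at round $k$, Player I plays $n_k\in\omega$ and then Player II plays $i_k\in\{0,1\}$. Player II wins iff $i_k=1$ for infinitely many $k$ and there is $g\in\mathcal{A}$ with $\{k\in\omega: i_k=1\}=\{k\in\omega: n_k<g(k)\}$. $\mathfrak{b}_{\mathrm{game}}^{\mathrm{II}}$ is the least $|\mathcal{A}|$ such that Player II has a winning strategy in the bounding game with respect to $\mathcal{A}$. *)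

theory Defs
  imports Main
begin

definition le_star :: "(nat \<Rightarrow> nat) \<Rightarrow> (nat \<Rightarrow> nat) \<Rightarrow> bool" where
  "le_star x y \<longleftrightarrow> finite {n. \<not> x n \<le> y n}"

definition dominating :: "(nat \<Rightarrow> nat) set \<Rightarrow> bool" where
  "dominating \<A> \<longleftrightarrow> (\<forall>x. \<exists>y\<in>\<A>. le_star x y)"

text \<open>Strategies for Player II: a function of Player I's moves n_0,...,n_k so far
  (II's own earlier moves are determined by these), giving i_k (True = 1).\<close>
definition II_play :: "(nat list \<Rightarrow> bool) \<Rightarrow> (nat \<Rightarrow> nat) \<Rightarrow> nat \<Rightarrow> bool" where
  "II_play \<sigma> x k = \<sigma> (map x [0..<Suc k])"

definition II_winning_strategy :: "(nat \<Rightarrow> nat) set \<Rightarrow> (nat list \<Rightarrow> bool) \<Rightarrow> bool" where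
  "II_winning_strategy \<A> \<sigma> \<longleftrightarrow>
     (\<forall>x :: nat \<Rightarrow> nat. infinite {k. II_play \<sigma> x k} \<and>
        (\<exists>g\<in>\<A>. {k. II_play \<sigma> x k} = {k. x k < g k}))"

definition II_wins_bounding_game :: "(nat \<Rightarrow> nat) set \<Rightarrow> bool" where
  "II_wins_bounding_game \<A> \<longleftrightarrow> (\<exists>\<sigma>. II_winning_strategy \<A> \<sigma>)"

end

theory Submission
  imports Defs
begin

lemma dominating_infinite:
  assumes "dominating D" shows "infinite D"
proof
  assume fin: "finite D"
  define x where "x = (\<lambda>k. Max ((\<lambda>y. y k) ` D) + 1)"
  obtain y where y: "y \<in> D" "le_star x y" using assms unfolding dominating_def by blast
  have "\<And>n. \<not> x n \<le> y n"
  proof -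
    fix n have "y n \<le> Max ((\<lambda>y. y n) ` D)" using fin y(1) by (intro Max_ge) auto
    thus "\<not> x n \<le> y n" unfolding x_def by simp
  qed
  hence "{n. \<not> x n \<le> y n} = UNIV" by auto
  thus False using y(2) unfolding le_star_def by simp
qed

lemma part2:
  assumes D: "dominating D"
  shows "\<exists>\<A>. II_wins_bounding_game \<A> \<and> (card_of \<A>, card_of D) \<in> ordLeq"
proof -
  define F where "F = (\<lambda>(y::nat\<Rightarrow>nat, M::nat). \<lambda>k::nat. if even k then max M (y k + 1) else 0)"
  define A where "A = F ` (D \<times> (UNIV::nat set))"
  have inf: "infinite D" using dominating_infinite[OF D] .
  have c1: "(card_of A, card_of (D \<times> (UNIV::nat set))) \<in> ordLeq"
    unfolding A_def by (rule card_of_image)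
  have c2: "(card_of (D \<times> (UNIV::nat set)), card_of D) \<in> ordIso"
    using inf by (intro card_of_Times_infinite_simps(1)) (auto simp: infinite_iff_card_of_nat[symmetric])
  have card: "(card_of A, card_of D) \<in> ordLeq"
    using c1 c2 ordLeq_ordIso_trans by blast
  define \<sigma> where "\<sigma> = (\<lambda>l::nat list. even (length l - 1))"
  have "II_winning_strategy A \<sigma>"
    unfolding II_winning_strategy_def
  proof (intro allI conjI)
    fix x :: "nat \<Rightarrow> nat"
    have eq: "{k. II_play \<sigma> x k} = {k. even k}" unfolding II_play_def \<sigma>_def by simp
    show "infinite {k. II_play \<sigma> x k}" unfolding eq
      unfolding finite_nat_set_iff_bounded_le by (metis dvd_triv_left mem_Collect_eq n_not_Suc_n le_SucI mult_2 le_add2 le_antisym)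
    obtain y where y: "y \<in> D" "le_star x y" using D unfolding dominating_def by blast
    have fS: "finite {n. \<not> x n \<le> y n}" using y(2) unfolding le_star_def .
    define M where "M = Max (x ` {n. \<not> x n \<le> y n}) + 1"
    have "\<And>n. \<not> x n \<le> y n \<Longrightarrow> x n < M"
      unfolding M_def using fS by (simp add: le_imp_less_Suc)
    hence lt: "\<And>n. x n < max M (y n + 1)" by (metis less_max_iff_disj not_le_imp_less le_imp_less_Suc Suc_eq_plus1)
    show "\<exists>g\<in>A. {k. II_play \<sigma> x k} = {k. x k < g k}"
      apply (rule bexI[of _ "F (y, M)"])
      using lt by (auto simp: eq F_def A_def y(1))
  qed
  thus ?thesis using card unfolding II_wins_bounding_game_def by blast
qed


definition cmv :: "(nat list \<Rightarrow> bool) \<Rightarrow> nat list \<Rightarrow> nat" where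
  "cmv \<sigma> q = (LEAST n. \<forall>m\<ge>n. \<not> \<sigma> (q @ [m]))"

definition good :: "(nat list \<Rightarrow> bool) \<Rightarrow> nat list \<Rightarrow> bool" where
  "good \<sigma> q \<longleftrightarrow> (\<exists>n. \<forall>m\<ge>n. \<not> \<sigma> (q @ [m]))"

primrec cont :: "(nat list \<Rightarrow> bool) \<Rightarrow> nat list \<Rightarrow> nat \<Rightarrow> nat list" where
  "cont \<sigma> p 0 = p"
| "cont \<sigma> p (Suc m) = cont \<sigma> p m @ [cmv \<sigma> (cont \<sigma> p m)]"

lemma good_cmv: "good \<sigma> q \<Longrightarrow> \<not> \<sigma> (q @ [cmv \<sigma> q])"
proof -
  assume "good \<sigma> q"
  hence "\<forall>m\<ge>cmv \<sigma> q. \<not> \<sigma> (q @ [m])" unfolding good_def cmv_def by (rule LeastI_ex)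
  thus ?thesis by simp
qed

lemma length_cont[simp]: "length (cont \<sigma> p m) = length p + m"
  by (induction m) auto

lemma cont_ext: "\<exists>r. cont \<sigma> p (m + d) = cont \<sigma> p m @ r"
  by (induction d) auto

lemma cont_nth: "i < length p + m \<Longrightarrow> i < length p + m' \<Longrightarrow> cont \<sigma> p m ! i = cont \<sigma> p m' ! i"
proof (cases "m \<le> m'")
  case True
  assume i: "i < length p + m"
  obtain r where "cont \<sigma> p m' = cont \<sigma> p m @ r" using cont_ext[of \<sigma> p m "m' - m"] True by auto
  thus ?thesis using i by (simp add: nth_append)
next
  case False
  assume i: "i < length p + m'"
  obtain r where "cont \<sigma> p m = cont \<sigma> p m' @ r" using cont_ext[of \<sigma> p m' "m - m'"] False by auto
  thus ?thesis using i by (simp add: nth_append)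
qed

lemma exists_bad:
  assumes W: "II_winning_strategy A \<sigma>"
  shows "\<exists>m. \<not> good \<sigma> (cont \<sigma> p m)"
proof (rule ccontr)
  assume "\<not> ?thesis"
  hence allg: "\<And>m. good \<sigma> (cont \<sigma> p m)" by blast
  define X where "X = (\<lambda>i. cont \<sigma> p (Suc i) ! i)"
  have mp: "map X [0..<Suc k] = cont \<sigma> p (Suc k - length p)" if "k \<ge> length p" for k
  proof (rule nth_equalityI)
    show "length (map X [0..<Suc k]) = length (cont \<sigma> p (Suc k - length p))" using that by simp
    fix i assume "i < length (map X [0..<Suc k])"
    hence "i < Suc k" by simp
    thus "map X [0..<Suc k] ! i = cont \<sigma> p (Suc k - length p) ! i"
    proof -
      have "map X [0..<Suc k] ! i = cont \<sigma> p (Suc i) ! i" using \<open>i < Suc k\<close> unfolding X_def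
        by (simp add: nth_map_upt X_def del: upt_Suc)
      also have "\<dots> = cont \<sigma> p (Suc k - length p) ! i"
        by (rule cont_nth) (use that \<open>i < Suc k\<close> in auto)
      finally show ?thesis .
    qed
  qed
  have "infinite {k. II_play \<sigma> X k}" using W unfolding II_winning_strategy_def by blast
  hence "\<not> (\<forall>n\<in>{k. II_play \<sigma> X k}. n \<le> length p)" using finite_nat_set_iff_bounded_le by blast
  then obtain k where k0: "II_play \<sigma> X k" "\<not> k \<le> length p" by blast
  hence k: "k \<ge> length p" "II_play \<sigma> X k" by auto
  have "Suc k - length p = Suc (k - length p)" using k(1) by simp
  moreover have "\<sigma> (map X [0..<Suc k])" using k(2) unfolding II_play_def by (simp del: upt_Suc)
  ultimately have "\<sigma> (cont \<sigma> p (Suc (k - length p)))" using mp[OF k(1)] by (simp del: upt_Suc)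
  thus False using good_cmv[OF allg[of "k - length p"]] by simp
qed

definition tstar :: "(nat list \<Rightarrow> bool) \<Rightarrow> nat list \<Rightarrow> nat" where
  "tstar \<sigma> p = length p + (LEAST m. \<not> good \<sigma> (cont \<sigma> p m))"

definition mv :: "(nat list \<Rightarrow> bool) \<Rightarrow> (nat \<Rightarrow> nat) \<Rightarrow> nat list \<Rightarrow> nat" where
  "mv \<sigma> z q = (if \<exists>n\<ge>z (length q). \<sigma> (q @ [n]) then LEAST n. z (length q) \<le> n \<and> \<sigma> (q @ [n]) else cmv \<sigma> q)"

primrec pre :: "(nat list \<Rightarrow> bool) \<Rightarrow> (nat \<Rightarrow> nat) \<Rightarrow> nat \<Rightarrow> nat list" where
  "pre \<sigma> z 0 = []"
| "pre \<sigma> z (Suc k) = pre \<sigma> z k @ [mv \<sigma> z (pre \<sigma> z k)]"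

definition play :: "(nat list \<Rightarrow> bool) \<Rightarrow> (nat \<Rightarrow> nat) \<Rightarrow> nat \<Rightarrow> nat" where
  "play \<sigma> z k = mv \<sigma> z (pre \<sigma> z k)"

lemma length_pre[simp]: "length (pre \<sigma> z k) = k"
  by (induction k) auto

lemma map_play: "map (play \<sigma> z) [0..<k] = pre \<sigma> z k"
  by (induction k) (auto simp: play_def)

lemma pre_nth: "k < j \<Longrightarrow> pre \<sigma> z j ! k = play \<sigma> z k"
  using map_play[of \<sigma> z j, symmetric] by simp

lemma pre_take: "k \<le> j \<Longrightarrow> take k (pre \<sigma> z j) = pre \<sigma> z k"
  using map_play[of \<sigma> z j, symmetric] map_play[of \<sigma> z k] by (simp add: take_map min_def)

definition Pg :: "(nat list \<Rightarrow> bool) \<Rightarrow> (nat \<Rightarrow> nat) \<Rightarrow> nat \<Rightarrow> nat list set" where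
  "Pg \<sigma> g j = {p. length p = j \<and> (\<forall>k<j. p ! k < g k \<or> p ! k = cmv \<sigma> (take k p))}"

lemma Pg_finite: "finite (Pg \<sigma> g j)"
proof (induction j)
  case 0
  have "Pg \<sigma> g 0 = {[]}" unfolding Pg_def by auto
  thus ?case by simp
next
  case (Suc j)
  have "Pg \<sigma> g (Suc j) \<subseteq> (\<lambda>(p,n). p @ [n]) ` (Pg \<sigma> g j \<times> {..<g j}) \<union> (\<lambda>p. p @ [cmv \<sigma> p]) ` Pg \<sigma> g j"
  proof
    fix p assume p: "p \<in> Pg \<sigma> g (Suc j)"
    hence len: "length p = Suc j" unfolding Pg_def by auto
    define q where "q = take j p"
    have peq: "p = q @ [p ! j]" unfolding q_def using len
      by (metis lessI take_Suc_conv_app_nth take_all order_refl)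
    have q: "q \<in> Pg \<sigma> g j" using p len unfolding Pg_def q_def by auto
    have "p ! j < g j \<or> p ! j = cmv \<sigma> q" using p len unfolding Pg_def q_def by auto
    thus "p \<in> (\<lambda>(p,n). p @ [n]) ` (Pg \<sigma> g j \<times> {..<g j}) \<union> (\<lambda>p. p @ [cmv \<sigma> p]) ` Pg \<sigma> g j"
      using q peq by (metis (no_types, lifting) UnI1 UnI2 case_prod_conv image_eqI lessThan_iff mem_Sigma_iff)
  qed
  moreover have "finite ((\<lambda>(p,n). p @ [n]) ` (Pg \<sigma> g j \<times> {..<g j}) \<union> (\<lambda>p. p @ [cmv \<sigma> p]) ` Pg \<sigma> g j)"
    using Suc by auto
  ultimately show ?case by (rule finite_subset)
qed

definition ghat :: "(nat list \<Rightarrow> bool) \<Rightarrow> (nat \<Rightarrow> nat) \<Rightarrow> nat \<Rightarrow> nat" where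
  "ghat \<sigma> g j = Max (g ` {j..Max (tstar \<sigma> ` Pg \<sigma> g j)})"

lemma key:
  assumes W: "II_winning_strategy A \<sigma>"
    and K: "\<And>k. \<sigma> (pre \<sigma> z (Suc k)) \<longleftrightarrow> play \<sigma> z k < g k"
  shows "\<exists>k\<ge>j. k \<le> tstar \<sigma> (pre \<sigma> z j) \<and> z k \<le> play \<sigma> z k \<and> play \<sigma> z k < g k"
proof -
  let ?p = "pre \<sigma> z j"
  define m0 where "m0 = (LEAST m. \<not> good \<sigma> (cont \<sigma> ?p m))"
  have bad: "\<not> good \<sigma> (cont \<sigma> ?p m0)" unfolding m0_def using exists_bad[OF W] by (rule LeastI_ex)
  define first where "first = (\<lambda>k. \<exists>n\<ge>z k. \<sigma> (pre \<sigma> z k @ [n]))"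
  have "\<exists>k\<ge>j. k \<le> j + m0 \<and> first k"
  proof (rule ccontr)
    assume nf: "\<not> ?thesis"
    have "m \<le> m0 \<Longrightarrow> pre \<sigma> z (j + m) = cont \<sigma> ?p m" for m
    proof (induction m)
      case 0 then show ?case by simp
    next
      case (Suc m)
      have "\<not> first (j + m)" using nf Suc.prems by auto
      hence "mv \<sigma> z (pre \<sigma> z (j+m)) = cmv \<sigma> (pre \<sigma> z (j+m))" unfolding first_def mv_def by auto
      thus ?case using Suc by simp
    qed
    hence eq: "pre \<sigma> z (j + m0) = cont \<sigma> ?p m0" by simp
    have "first (j + m0)" using bad unfolding good_def first_def eq by (meson not_le_imp_less less_imp_le)
    thus False using nf by auto
  qed
  then obtain k where k: "k \<ge> j" "k \<le> j + m0" "first k" by blast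
  have pk: "play \<sigma> z k = (LEAST n. z k \<le> n \<and> \<sigma> (pre \<sigma> z k @ [n]))"
    using k(3) unfolding play_def mv_def first_def by simp
  have "z k \<le> play \<sigma> z k \<and> \<sigma> (pre \<sigma> z k @ [play \<sigma> z k])"
    unfolding pk using k(3) unfolding first_def by (rule LeastI2_ex) auto
  hence "z k \<le> play \<sigma> z k" "play \<sigma> z k < g k" using K[of k] by (auto simp: play_def)
  moreover have "k \<le> tstar \<sigma> ?p" using k unfolding tstar_def m0_def by simp
  ultimately show ?thesis using k by blast
qed

lemma part1:
  assumes G: "II_wins_bounding_game A"
  shows "\<exists>D. dominating D \<and> (card_of D, card_of A) \<in> ordLeq"
proof -
  obtain \<sigma> where W: "II_winning_strategy A \<sigma>" using G unfolding II_wins_bounding_game_def by blast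
  define D where "D = ghat \<sigma> ` A"
  have "dominating D" unfolding dominating_def
  proof
    fix x :: "nat \<Rightarrow> nat"
    define z where "z = (\<lambda>k. Max (x ` {..k}))"
    obtain g where g: "g \<in> A" "{k. II_play \<sigma> (play \<sigma> z) k} = {k. play \<sigma> z k < g k}"
      using W unfolding II_winning_strategy_def by blast
    have K: "\<sigma> (pre \<sigma> z (Suc k)) \<longleftrightarrow> play \<sigma> z k < g k" for k
      using g(2) unfolding II_play_def map_play by blast
    have "x j \<le> ghat \<sigma> g j" for j
    proof -
      obtain k where k: "k \<ge> j" "k \<le> tstar \<sigma> (pre \<sigma> z j)" "z k \<le> play \<sigma> z k" "play \<sigma> z k < g k"
        using key[OF W K] by blast
      have inP: "pre \<sigma> z j \<in> Pg \<sigma> g j"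
        unfolding Pg_def
      proof (intro CollectI conjI allI impI)
        show "length (pre \<sigma> z j) = j" by simp
        fix i assume i: "i < j"
        have "pre \<sigma> z j ! i = play \<sigma> z i" "take i (pre \<sigma> z j) = pre \<sigma> z i"
          using i by (auto simp: pre_nth pre_take)
        moreover have "play \<sigma> z i < g i \<or> play \<sigma> z i = cmv \<sigma> (pre \<sigma> z i)"
        proof (cases "\<exists>n\<ge>z i. \<sigma> (pre \<sigma> z i @ [n])")
          case True
          have "z i \<le> play \<sigma> z i \<and> \<sigma> (pre \<sigma> z i @ [play \<sigma> z i])"
            unfolding play_def mv_def using True by simp (rule LeastI2_ex, auto)
          thus ?thesis using K[of i] by (auto simp: play_def)
        next
          case False thus ?thesis unfolding play_def mv_def by auto
        qed
        ultimately show "pre \<sigma> z j ! i < g i \<or> pre \<sigma> z j ! i = cmv \<sigma> (take i (pre \<sigma> z j))" by simp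
      qed
      have "tstar \<sigma> (pre \<sigma> z j) \<le> Max (tstar \<sigma> ` Pg \<sigma> g j)"
        using inP Pg_finite by (intro Max_ge) auto
      hence "g k \<le> ghat \<sigma> g j" unfolding ghat_def using k by (intro Max_ge) auto
      moreover have "x j \<le> z j" unfolding z_def by (intro Max_ge) auto
      moreover have "z j \<le> z k" unfolding z_def using k(1) by (intro Max_mono) auto
      ultimately show ?thesis using k by linarith
    qed
    hence "le_star x (ghat \<sigma> g)" unfolding le_star_def by simp
    thus "\<exists>y\<in>D. le_star x y" using g(1) unfolding D_def by blast
  qed
  moreover have "(card_of D, card_of A) \<in> ordLeq" unfolding D_def by (rule card_of_image)
  ultimately show ?thesis by blast
qed

theorem mainTheorem2:
  shows "(\<forall>\<A>. II_wins_bounding_game \<A> \<longrightarrow> (\<exists>\<D>. dominating \<D> \<and> (card_of \<D>, card_of \<A>) \<in> ordLeq))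
       \<and> (\<forall>\<D>. dominating \<D> \<longrightarrow> (\<exists>\<A>. II_wins_bounding_game \<A> \<and> (card_of \<A>, card_of \<D>) \<in> ordLeq))"
  using part1 part2 by blast

end
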